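(* Any finite polyhedral complex $K$ in $\mathbb{R}^n$ is homotopy equivalent to a polyhedral complex $K'$ in $\mathbb{R}^n$ in which no cell contains a straight line, and $K$ and $K'$ have equal numbers of cells.
   Context: A polyhedral complex in $\mathbb{R}^n$ is a finite collection of closed convex polyhedra (cells), closed under taking faces, any two meeting in a common face; it is identified with the union of its cells. *)

theory Defs
  imports "HOL-Analysis.Analysis"
begin

definition polyhedral_complex :: "'a::euclidean_space set set \<Rightarrow> bool" where
  "polyhedral_complex K \<longleftrightarrow>
     finite K \<and>
     (\<forall>C\<in>K. polyhedron C \<and> C \<noteq> {}) \<and>
     (\<forall>C\<in>K. \<forall>F. F face_of C \<and> F \<noteq> {} \<longrightarrow> F \<in> K) \<and>
     (\<forall>C\<in>K. \<forall>D\<in>K. (C \<inter> D) face_of C \<and> (C \<inter> D) face_of D)"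

definition contains_line :: "'a::real_vector set \<Rightarrow> bool" where
  "contains_line C \<longleftrightarrow> (\<exists>a v. v \<noteq> 0 \<and> (\<forall>t::real. a + t *\<^sub>R v \<in> C))"

end

theory Submission
  imports Defs
begin

definition lin :: "'a::euclidean_space set \<Rightarrow> 'a set" where
  "lin C = {v. \<forall>x\<in>C. \<forall>t::real. x + t *\<^sub>R v \<in> C}"

definition orth :: "'a::euclidean_space set \<Rightarrow> 'a set" where
  "orth L = {y. \<forall>x\<in>L. orthogonal x y}"

definition prj :: "'a::euclidean_space set \<Rightarrow> 'a \<Rightarrow> 'a" where
  "prj L x = (SOME y. y \<in> L \<and> (\<forall>w\<in>L. orthogonal (x - y) w))"

definition rr :: "'a::euclidean_space set \<Rightarrow> 'a \<Rightarrow> 'a" where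
  "rr L x = x - prj L x"

lemma subspace_lin: "subspace (lin C)"
  unfolding subspace_def lin_def
proof (intro conjI ballI allI)
  fix x y t assume "x \<in> {v. \<forall>x\<in>C. \<forall>t::real. x + t *\<^sub>R v \<in> C}" "y \<in> {v. \<forall>x\<in>C. \<forall>t::real. x + t *\<^sub>R v \<in> C}"
  then have a: "\<And>z s. z \<in> C \<Longrightarrow> z + s *\<^sub>R x \<in> C" and b: "\<And>z s. z \<in> C \<Longrightarrow> z + s *\<^sub>R y \<in> C" by auto
  show "x + y \<in> {v. \<forall>x\<in>C. \<forall>t::real. x + t *\<^sub>R v \<in> C}"
  proof (intro CollectI ballI allI)
    fix z s assume "z \<in> C"
    then have "(z + s *\<^sub>R x) + s *\<^sub>R y \<in> C" using a b by blast
    then show "z + s *\<^sub>R (x + y) \<in> C" by (simp add: algebra_simps)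
  qed
next
  fix c :: real and x assume "x \<in> {v. \<forall>x\<in>C. \<forall>t::real. x + t *\<^sub>R v \<in> C}"
  then have a: "\<And>z s. z \<in> C \<Longrightarrow> z + s *\<^sub>R x \<in> C" by auto
  show "c *\<^sub>R x \<in> {v. \<forall>x\<in>C. \<forall>t::real. x + t *\<^sub>R v \<in> C}"
    using a[of _ "_ * c"] by auto
qed auto

lemma subspace_orth: "subspace (orth L)"
  unfolding orth_def by (rule subspace_orthogonal_to_vectors)

lemma prj_props:
  assumes "subspace L"
  shows "prj L x \<in> L \<and> (\<forall>w\<in>L. orthogonal (x - prj L x) w)"
proof -
  obtain y z where "y \<in> span L" "\<And>w. w \<in> span L \<Longrightarrow> orthogonal z w" "x = y + z"
    using orthogonal_subspace_decomp_exists by blast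
  moreover have sp: "span L = L" using assms by (simp add: span_eq_iff)
  ultimately have "y \<in> L \<and> (\<forall>w\<in>L. orthogonal (x - y) w)"
    by simp
  then show ?thesis unfolding prj_def by (rule someI)
qed

lemma prj_unique:
  assumes "subspace L" "y \<in> L" "\<forall>w\<in>L. orthogonal (x - y) w"
  shows "prj L x = y"
proof -
  let ?p = "prj L x"
  have p: "?p \<in> L" "\<forall>w\<in>L. orthogonal (x - ?p) w" using prj_props[OF assms(1)] by auto
  have d: "?p - y \<in> L" using p(1) assms(2) assms(1) subspace_diff by blast
  have "(x - y) \<bullet> (?p - y) = 0" "(x - ?p) \<bullet> (?p - y) = 0"
    using assms(3) p(2) d by (auto simp: orthogonal_def)
  moreover have "?p - y = (x - y) - (x - ?p)" by simp
  ultimately have "(?p - y) \<bullet> (?p - y) = 0"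
    by (metis inner_diff_left diff_self)
  then show ?thesis by simp
qed

lemma prj_in: "subspace L \<Longrightarrow> prj L x \<in> L"
  using prj_props by blast

lemma prj_id: "subspace L \<Longrightarrow> v \<in> L \<Longrightarrow> prj L v = v"
  by (rule prj_unique) (auto simp: orthogonal_def)

lemma linear_prj:
  assumes "subspace L"
  shows "linear (prj L)"
proof (rule linearI)
  fix x y
  show "prj L (x + y) = prj L x + prj L y"
  proof (rule prj_unique[OF assms])
    show "prj L x + prj L y \<in> L" using prj_in assms subspace_add by blast
    show "\<forall>w\<in>L. orthogonal (x + y - (prj L x + prj L y)) w"
      using prj_props[OF assms, of x] prj_props[OF assms, of y]
      by (auto simp: orthogonal_def algebra_simps inner_diff_left inner_add_left)
  qed
next
  fix c :: real and x
  show "prj L (c *\<^sub>R x) = c *\<^sub>R prj L x"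
  proof (rule prj_unique[OF assms])
    show "c *\<^sub>R prj L x \<in> L" using prj_in assms subspace_scale by blast
    have "c *\<^sub>R x - c *\<^sub>R prj L x = c *\<^sub>R (x - prj L x)" by (simp add: algebra_simps)
    then show "\<forall>w\<in>L. orthogonal (c *\<^sub>R x - c *\<^sub>R prj L x) w"
      using prj_props[OF assms, of x] by (auto simp: orthogonal_def)
  qed
qed

lemma linear_rr:
  assumes "subspace L" shows "linear (rr L)"
proof -
  have "bounded_linear (prj L)" using linear_prj[OF assms] by (simp only: linear_conv_bounded_linear)
  then have "bounded_linear (\<lambda>x. x - prj L x)" by (intro bounded_linear_sub bounded_linear_ident)
  then show ?thesis unfolding rr_def by (simp only: linear_conv_bounded_linear)
qed

lemma cont_rr: "subspace L \<Longrightarrow> continuous_on S (rr L)"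
  by (rule linear_continuous_on) (simp only: linear_rr flip: linear_conv_bounded_linear)

lemma rr_comb: "subspace L \<Longrightarrow> rr L ((1 - u) *\<^sub>R a + u *\<^sub>R b) = (1 - u) *\<^sub>R rr L a + u *\<^sub>R rr L b"
  using linear_rr[of L] by (simp add: linear_add linear_scale)

lemma rr_orth: "subspace L \<Longrightarrow> rr L x \<in> orth L"
  using prj_props[of L x] unfolding rr_def orth_def by (auto simp: orthogonal_commute)

lemma rr_id: "subspace L \<Longrightarrow> y \<in> orth L \<Longrightarrow> rr L y = y"
proof -
  assume a: "subspace L" "y \<in> orth L"
  have "prj L y = 0"
    by (rule prj_unique[OF a(1)]) (use a in \<open>auto simp: orth_def subspace_0 orthogonal_commute\<close>)
  then show ?thesis by (simp add: rr_def)
qed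

lemma lin_line:
  assumes "closed C" "convex C" "y \<in> C" "\<And>s. y + s *\<^sub>R v \<in> C"
  shows "v \<in> lin C"
  unfolding lin_def
proof (intro CollectI ballI allI)
  fix x t assume x: "x \<in> C"
  have "x + t *\<^sub>R v \<in> closure C"
    unfolding closure_approachable
  proof (intro allI impI)
    fix e :: real assume e: "e > 0"
    define \<epsilon> where "\<epsilon> = min 1 (e / (norm (y - x) + 1))"
    have np: "0 < norm (y - x) + 1" by (simp add: add_nonneg_pos)
    have \<epsilon>0: "0 < \<epsilon>" "\<epsilon> \<le> 1" using e np by (auto simp: \<epsilon>_def)
    have lt: "\<epsilon> * norm (y - x) < e"
    proof -
      have "\<epsilon> * norm (y - x) \<le> e / (norm (y - x) + 1) * norm (y - x)"
        unfolding \<epsilon>_def by (intro mult_right_mono) auto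
      also have "\<dots> < e"
      proof -
        have q: "norm (y - x) / (norm (y - x) + 1) < 1" using np by simp
        have "e * (norm (y - x) / (norm (y - x) + 1)) < e * 1" using mult_strict_left_mono[OF q e] .
        then show ?thesis by simp
      qed
      finally show ?thesis .
    qed
    define z where "z = (1 - \<epsilon>) *\<^sub>R x + \<epsilon> *\<^sub>R (y + (t/\<epsilon>) *\<^sub>R v)"
    have zC: "z \<in> C" unfolding z_def
      using convexD[OF assms(2) x assms(4)[of "t/\<epsilon>"]] \<epsilon>0 by auto
    have "z = x + t *\<^sub>R v + \<epsilon> *\<^sub>R (y - x)" using \<epsilon>0 by (simp add: z_def algebra_simps)
    then have "dist z (x + t *\<^sub>R v) = \<epsilon> * norm (y - x)" using \<epsilon>0 by (simp add: dist_norm)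
    with lt have d: "dist z (x + t *\<^sub>R v) < e" by simp
    show "\<exists>z\<in>C. dist z (x + t *\<^sub>R v) < e"
      using zC d by blast
  qed
  then show "x + t *\<^sub>R v \<in> C" using assms(1) closure_closed by blast
qed

lemma face_lin:
  assumes "F face_of C" "F \<noteq> {}" "closed C" "convex C"
  shows "lin F = lin C"
proof
  show "lin F \<subseteq> lin C"
  proof
    fix v assume v: "v \<in> lin F"
    obtain y where y: "y \<in> F" using assms(2) by auto
    have "y + s *\<^sub>R v \<in> C" for s using v y face_of_imp_subset[OF assms(1)] by (auto simp: lin_def)
    then show "v \<in> lin C" using lin_line assms y face_of_imp_subset[OF assms(1)] by blast
  qed
  show "lin C \<subseteq> lin F"
  proof
    fix v assume v: "v \<in> lin C"
    show "v \<in> lin F" unfolding lin_def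
    proof (intro CollectI ballI allI)
      fix y t assume y: "y \<in> F"
      have yC: "y \<in> C" using y face_of_imp_subset[OF assms(1)] by auto
      show "y + t *\<^sub>R v \<in> F"
      proof (cases "t *\<^sub>R v = 0")
        case True then show ?thesis using y by (metis add.right_neutral)
      next
        case False
        have "y + (-t) *\<^sub>R v \<in> C" using v yC unfolding lin_def by blast
        then have a: "y - t *\<^sub>R v \<in> C" by simp
        have b: "y + t *\<^sub>R v \<in> C" using v yC by (auto simp: lin_def)
        have ne: "y - t *\<^sub>R v \<noteq> y + t *\<^sub>R v"
        proof
          assume "y - t *\<^sub>R v = y + t *\<^sub>R v"
          then have "t *\<^sub>R v + t *\<^sub>R v = 0" by (simp add: algebra_simps)
          then have "2 *\<^sub>R (t *\<^sub>R v) = 0" by (simp only: scaleR_2)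
          then show False using False by simp
        qed
        have h: "(1/2::real) + 1/2 = 1" by simp
        have hh: "(1/2::real) *\<^sub>R y + (1/2) *\<^sub>R y = y" by (metis h scaleR_add_left scaleR_one)
        have "y = (1 - 1/2) *\<^sub>R (y - t *\<^sub>R v) + (1/2) *\<^sub>R (y + t *\<^sub>R v)"
          using hh by (simp add: algebra_simps)
        then have "y \<in> open_segment (y - t *\<^sub>R v) (y + t *\<^sub>R v)"
          unfolding in_segment using ne by (intro conjI exI[of _ "1/2"]) auto
        then show ?thesis using face_ofD[OF assms(1) _ a b y] by blast
      qed
    qed
  qed
qed

lemma face_Int_M:
  assumes "G face_of C" "convex M"
  shows "(G \<inter> M) face_of (C \<inter> M)"
  using face_of_Int_Int[OF assms(1) face_of_refl[OF assms(2)]] .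

theorem lemma4p5:
  fixes K :: "'a::euclidean_space set set"
  assumes "polyhedral_complex K"
  shows "\<exists>K'::'a set set. polyhedral_complex K' \<and> (\<forall>C\<in>K'. \<not> contains_line C) \<and>
           (\<Union>K) homotopy_eqv (\<Union>K') \<and> card K' = card K"
proof -
  have A: "finite K \<and>
     (\<forall>C\<in>K. polyhedron C \<and> C \<noteq> {}) \<and>
     (\<forall>C\<in>K. \<forall>F. F face_of C \<and> F \<noteq> {} \<longrightarrow> F \<in> K) \<and>
     (\<forall>C\<in>K. \<forall>D\<in>K. (C \<inter> D) face_of C \<and> (C \<inter> D) face_of D)"
    using assms unfolding polyhedral_complex_def .
  have fin: "finite K" using A by blast
  have cell: "\<And>C. C \<in> K \<Longrightarrow> polyhedron C \<and> C \<noteq> {}" using A by blast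
  have faceK: "\<And>C F. C \<in> K \<Longrightarrow> F face_of C \<Longrightarrow> F \<noteq> {} \<Longrightarrow> F \<in> K"
    using A by blast
  have inter: "\<And>C D. C \<in> K \<Longrightarrow> D \<in> K \<Longrightarrow> (C \<inter> D) face_of C \<and> (C \<inter> D) face_of D"
    using A by blast
  have clo: "\<And>C. C \<in> K \<Longrightarrow> closed C" using cell polyhedron_imp_closed by blast
  have cvx: "\<And>C. C \<in> K \<Longrightarrow> convex C" using cell polyhedron_imp_convex by blast
  have SL: "\<And>C. subspace (lin C)" by (rule subspace_lin)
  have linEq: "lin C = lin D" if "C \<in> K" "D \<in> K" "x \<in> C" "x \<in> D" for C D x
  proof -
    have ne: "C \<inter> D \<noteq> {}" using that by auto
    have "lin (C \<inter> D) = lin C" using face_lin[OF conjunct1[OF inter[OF that(1,2)]] ne clo cvx] that by blast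
    moreover have "lin (C \<inter> D) = lin D" using face_lin[OF conjunct2[OF inter[OF that(1,2)]] ne clo cvx] that by blast
    ultimately show ?thesis by simp
  qed
  define f where "f C = C \<inter> orth (lin C)" for C :: "'a set"
  have rrC: "rr (lin C) x \<in> C" if "C \<in> K" "x \<in> C" for C x
  proof -
    have "prj (lin C) x \<in> lin C" using prj_in[OF SL] .
    then have "x + (-1) *\<^sub>R prj (lin C) x \<in> C" using that(2) unfolding lin_def by blast
    then show ?thesis by (simp add: rr_def)
  qed
  have rrf: "rr (lin C) x \<in> f C" if "C \<in> K" "x \<in> C" for C x
    using rrC[OF that] rr_orth[OF SL] by (simp add: f_def)
  have Crec: "C = {x. rr (lin C) x \<in> f C}" if "C \<in> K" for C
  proof (intro set_eqI iffI)
    fix x assume "x \<in> C" then show "x \<in> {x. rr (lin C) x \<in> f C}" using rrf[OF that] by simp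
  next
    fix x assume "x \<in> {x. rr (lin C) x \<in> f C}"
    then have a: "rr (lin C) x \<in> C" by (simp add: f_def)
    have "prj (lin C) x \<in> lin C" using prj_in[OF SL] .
    then have "rr (lin C) x + 1 *\<^sub>R prj (lin C) x \<in> C" using a unfolding lin_def by blast
    then show "x \<in> C" by (simp add: rr_def)
  qed
  have fsub: "f C \<subseteq> C" for C by (auto simp: f_def)
  have fne: "f C \<noteq> {}" if C: "C \<in> K" for C
  proof -
    obtain x where "x \<in> C" using cell[OF C] by auto
    then show ?thesis using rrf[OF C] by auto
  qed
  have fpoly: "polyhedron (f C)" if "C \<in> K" for C
  proof -
    have "polyhedron C" using cell[OF that] by blast
    moreover have "polyhedron (orth (lin C))"
      by (rule affine_imp_polyhedron[OF subspace_imp_affine[OF subspace_orth]])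
    ultimately show ?thesis unfolding f_def by (rule polyhedron_Int)
  qed
  have fnoline: "\<not> contains_line (f C)" if "C \<in> K" for C
  proof
    assume "contains_line (f C)"
    then obtain a v where v: "v \<noteq> 0" and av: "\<And>t::real. a + t *\<^sub>R v \<in> f C"
      by (auto simp: contains_line_def)
    have hC: "\<And>t::real. a + t *\<^sub>R v \<in> C" using av fsub by blast
    have aC: "a \<in> C" using hC[of 0] by simp
    have vL: "v \<in> lin C" by (rule lin_line[OF clo[OF that] cvx[OF that] aC hC])
    have "a \<in> orth (lin C)" using av[of 0] by (simp add: f_def)
    moreover have "a + v \<in> orth (lin C)" using av[of 1] by (simp add: f_def)
    ultimately have "(a + v) - a \<in> orth (lin C)" using subspace_orth subspace_diff by blast
    then have "v \<in> orth (lin C)" by simp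
    with vL have "orthogonal v v" by (auto simp: orth_def)
    with v show False by (simp add: orthogonal_self)
  qed
  have ffaces: "F' \<in> f ` K" if C: "C \<in> K" and F': "F' face_of f C" "F' \<noteq> {}" for C F'
  proof -
    let ?L = "lin C"
    define F where "F = {x \<in> C. rr ?L x \<in> F'}"
    have F'sub: "F' \<subseteq> f C" using face_of_imp_subset[OF F'(1)] .
    have linr: "linear (rr ?L)" using linear_rr[OF SL] .
    have Fface: "F face_of C"
      unfolding face_of_def
    proof (intro conjI ballI impI)
      show "F \<subseteq> C" by (auto simp: F_def)
      have "F = C \<inter> rr ?L -` F'" by (auto simp: F_def)
      then show "convex F"
        using convex_Int[OF cvx[OF C] convex_linear_vimage[OF linr face_of_imp_convex[OF F'(1)]]] by simp
    next
      fix a b x assume ab: "a \<in> C" "b \<in> C" and x: "x \<in> F" and seg: "x \<in> open_segment a b"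
      obtain u where u: "0 < u" "u < 1" and xe: "x = (1 - u) *\<^sub>R a + u *\<^sub>R b"
        using seg unfolding in_segment by auto
      have rx: "rr ?L x = (1 - u) *\<^sub>R rr ?L a + u *\<^sub>R rr ?L b"
        using xe rr_comb[OF SL] by simp
      have rxF: "rr ?L x \<in> F'" using x by (simp add: F_def)
      have "rr ?L a \<in> F' \<and> rr ?L b \<in> F'"
      proof (cases "rr ?L a = rr ?L b")
        case True
        then have "rr ?L x = rr ?L a" using rx by (simp add: scaleR_left_distrib[symmetric])
        then show ?thesis using rxF True by simp
      next
        case False
        then have "rr ?L x \<in> open_segment (rr ?L a) (rr ?L b)"
          unfolding in_segment using u rx by blast
        then show ?thesis using face_ofD[OF F'(1) _ rrf[OF C ab(1)] rrf[OF C ab(2)] rxF] by blast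
      qed
      then show "a \<in> F" "b \<in> F" using ab by (auto simp: F_def)
    qed
    obtain y where y: "y \<in> F'" using F'(2) by auto
    then have yC: "y \<in> C" "y \<in> orth ?L" using F'sub by (auto simp: f_def)
    then have "rr ?L y = y" using rr_id[OF SL] by blast
    then have "y \<in> F" using y yC by (simp add: F_def)
    then have Fne: "F \<noteq> {}" by auto
    have FK: "F \<in> K" using faceK[OF C Fface Fne] .
    have linF: "lin F = ?L" using face_lin[OF Fface Fne clo[OF C] cvx[OF C]] .
    have "f F = F'"
    proof (intro set_eqI iffI)
      fix x assume "x \<in> f F"
      then have xF: "x \<in> F" and xo: "x \<in> orth ?L" by (auto simp: f_def linF)
      have "rr ?L x = x" using rr_id[OF SL xo] .
      then show "x \<in> F'" using xF by (simp add: F_def)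
    next
      fix x assume x: "x \<in> F'"
      then have "x \<in> C" "x \<in> orth ?L" using F'sub by (auto simp: f_def)
      moreover have "rr ?L x = x" using calculation rr_id[OF SL] by blast
      ultimately show "x \<in> f F" using x unfolding f_def linF by (auto simp: F_def)
    qed
    then show ?thesis using FK by blast
  qed
  have finter: "(f C \<inter> f D) face_of f C \<and> (f C \<inter> f D) face_of f D" if "C \<in> K" "D \<in> K" for C D
  proof (cases "C \<inter> D = {}")
    case True
    then have "f C \<inter> f D = {}" using fsub by blast
    then show ?thesis by simp
  next
    case False
    then obtain x where "x \<in> C" "x \<in> D" by auto
    then have eq: "lin C = lin D" using linEq that by blast
    have M: "convex (orth (lin C))" using subspace_orth subspace_imp_convex by blast
    have e: "f C \<inter> f D = (C \<inter> D) \<inter> orth (lin C)" by (auto simp: f_def eq)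
    show ?thesis
      using face_Int_M[OF conjunct1[OF inter[OF that]] M] face_Int_M[OF conjunct2[OF inter[OF that]] M]
      unfolding e by (simp add: f_def eq)
  qed
  have finj: "inj_on f K"
  proof (rule inj_onI)
    fix C D assume CD: "C \<in> K" "D \<in> K" "f C = f D"
    obtain y where "y \<in> f C" using fne[OF CD(1)] by auto
    then have "y \<in> C" "y \<in> D" using CD(3) fsub by blast+
    then have eq: "lin C = lin D" using linEq CD by blast
    show "C = D" using Crec[OF CD(1)] Crec[OF CD(2)] CD(3) eq by simp
  qed
  define K' where "K' = f ` K"
  have pc: "polyhedral_complex K'"
    unfolding polyhedral_complex_def K'_def
  proof (intro conjI ballI allI impI)
    show "finite (f ` K)" using fin by simp
  next
    fix C' assume "C' \<in> f ` K"
    then show "polyhedron C'" "C' \<noteq> {}" using fpoly fne by auto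
  next
    fix C' F assume "C' \<in> f ` K" "F face_of C' \<and> F \<noteq> {}"
    then show "F \<in> f ` K" using ffaces by blast
  next
    fix C' D' assume "C' \<in> f ` K" "D' \<in> f ` K"
    then show "(C' \<inter> D') face_of C'" "(C' \<inter> D') face_of D'" using finter by blast+
  qed
  have noline: "\<forall>C\<in>K'. \<not> contains_line C" using fnoline by (auto simp: K'_def)
  have card: "card K' = card K" unfolding K'_def using card_image[OF finj] .
  define R where "R x = rr (lin (SOME C. C \<in> K \<and> x \<in> C)) x" for x
  have RC: "R x = rr (lin C) x" if "C \<in> K" "x \<in> C" for C x
  proof -
    have "\<exists>C. C \<in> K \<and> x \<in> C" using that by blast
    then have s: "(SOME C. C \<in> K \<and> x \<in> C) \<in> K \<and> x \<in> (SOME C. C \<in> K \<and> x \<in> C)" by (rule someI_ex)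
    then have "lin (SOME C. C \<in> K \<and> x \<in> C) = lin C" using linEq that by blast
    then show ?thesis by (simp add: R_def)
  qed
  have UU: "\<Union>K = (\<Union>C\<in>K. C)" by simp
  have contR: "continuous_on (\<Union>K) R"
    unfolding UU
  proof (rule continuous_on_closed_Union[OF fin clo])
    fix C assume "C \<in> K"
    then show "continuous_on C R"
      using continuous_on_eq[OF cont_rr[OF SL]] RC by metis
  qed
  have ret: "retraction (\<Union>K) (\<Union>K') R"
    unfolding retraction_def
  proof (intro conjI ballI)
    show "\<Union>K' \<subseteq> \<Union>K" using fsub by (auto simp: K'_def)
    show "continuous_on (\<Union>K) R" by (rule contR)
    show "R \<in> \<Union>K \<rightarrow> \<Union>K'"
    proof
      fix x assume "x \<in> \<Union>K"
      then obtain C where C: "C \<in> K" "x \<in> C" by auto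
      then have "R x \<in> f C" using RC[OF C] rrf[OF C] by simp
      then show "R x \<in> \<Union>K'" using C(1) by (auto simp: K'_def)
    qed
  next
    fix x assume "x \<in> \<Union>K'"
    then obtain C where C: "C \<in> K" "x \<in> f C" by (auto simp: K'_def)
    then have "x \<in> C" "x \<in> orth (lin C)" by (auto simp: f_def)
    then show "R x = x" using RC[OF C(1)] rr_id[OF SL] by simp
  qed
  have hom: "homotopic_with_canon (\<lambda>x. True) (\<Union>K) (\<Union>K) id R"
  proof (rule homotopic_with_linear[OF continuous_on_id' contR])
    fix x assume "x \<in> \<Union>K"
    then obtain C where C: "C \<in> K" "x \<in> C" by auto
    then have "R x \<in> C" using RC rrC by simp
    then have "closed_segment x (R x) \<subseteq> C" using closed_segment_subset C cvx by blast
    then show "closed_segment (id x) (R x) \<subseteq> \<Union>K" using C by auto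
  qed
  have "(\<Union>K) homotopy_eqv (\<Union>K')" using deformation_retract_imp_homotopy_eqv[OF hom ret] .
  then show ?thesis using pc noline card by blast
qed

end
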